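(* Let $\varphi:X\to\mathbb R$ be Lipschitz continuous. Every calibrated subaction $u$ of $\varphi$ satisfies \[u(\underline{y})=\inf_{\underline{x}\in\Omega_\varphi}\big(H_\varphi(\underline{x},\underline{y})+u(\underline{x})\big)\quad\text{for every }\underline{y}\in X.\]
   Context: $X=[0,1]^{\mathbb N_0}$ with metric $d_X(\underline{x},\underline{y})=\sum_{i\ge0}|x_i-y_i|/2^{i+1}$ and shift $\sigma(\underline{x})_i=x_{i+1}$. $\alpha_\varphi=\inf_\mu\int\varphi\,d\mu$ over $\sigma$-invariant Borel probability measures. $B(\underline{x},\underline{y},n;\varepsilon)=\{\underline{z}: d_X(\underline{x},\underline{z})<\varepsilon,\ d_X(\sigma^n\underline{z},\underline{y})<\varepsilon\}$. Mañé potential $S_\varphi(\underline{x},\underline{y})=\lim_{\varepsilon\to0}\inf\{\sum_{i=0}^{n-1}(\varphi(\sigma^i\underline{z})-\alpha_\varphi): n\in\mathbb N,\ \underline{z}\in B(\underline{x},\underline{y},n;\varepsilon)\}$; Peierls barrier $H_\varphi(\underline{x},\underline{y})=\lim_{\varepsilon\to0}\liminf_{n\to\infty}\inf\{\sum_{i=0}^{n-1}(\varphi(\sigma^i\underline{z})-\alpha_\varphi): \underline{z}\in B(\underline{x},\underline{y},n;\varepsilon)\}\in\mathbb R\cup\{+\infty\}$; Aubry set $\Omega_\varphi=\{\underline{x}: S_\varphi(\underline{x},\underline{x})=0\}$. A subaction of $\varphi$ is a continuous $u:X\to\mathbb R$ with $u(\underline{x})+\varphi(\underline{x})\ge u(\sigma\underline{x})+\alpha_\varphi$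 for all $\underline{x}$; it is calibrated if moreover $\min_{\sigma(\underline{y})=\underline{x}}(\varphi(\underline{y})+u(\underline{y}))=u(\underline{x})+\alpha_\varphi$ for every $\underline{x}\in X$. *)

theory Defs
  imports "HOL-Probability.Probability"
begin

type_synonym seq = "nat \<Rightarrow> real"

definition Xsp :: "seq set" where
  "Xsp = {x. \<forall>i. x i \<in> {0..1}}"

definition dX :: "seq \<Rightarrow> seq \<Rightarrow> real" where
  "dX x y = (\<Sum>i. \<bar>x i - y i\<bar> / 2 ^ (i + 1))"

definition shift :: "seq \<Rightarrow> seq" where
  "shift x = (\<lambda>i. x (Suc i))"

definition openX :: "seq set \<Rightarrow> bool" where
  "openX U \<longleftrightarrow> U \<subseteq> Xsp \<and> (\<forall>x\<in>U. \<exists>e>0. \<forall>z\<in>Xsp. dX x z < e \<longrightarrow> z \<in> U)"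

definition borelX :: "seq measure" where
  "borelX = sigma Xsp {U. openX U}"

definition invariant_measures :: "seq measure set" where
  "invariant_measures = {M. prob_space M \<and> sets M = sets borelX \<and>
      shift \<in> measurable M M \<and> distr M M shift = M}"

definition alpha :: "(seq \<Rightarrow> real) \<Rightarrow> real" where
  "alpha \<phi> = Inf {integral\<^sup>L M \<phi> | M. M \<in> invariant_measures}"

definition birk :: "(seq \<Rightarrow> real) \<Rightarrow> nat \<Rightarrow> seq \<Rightarrow> real" where
  "birk \<phi> n z = (\<Sum>i<n. \<phi> ((shift ^^ i) z) - alpha \<phi>)"

definition Bset :: "seq \<Rightarrow> seq \<Rightarrow> nat \<Rightarrow> real \<Rightarrow> seq set" where
  "Bset x y n e = {z \<in> Xsp. dX x z < e \<and> dX ((shift ^^ n) z) y < e}"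

definition mane :: "(seq \<Rightarrow> real) \<Rightarrow> seq \<Rightarrow> seq \<Rightarrow> ereal" where
  "mane \<phi> x y = Lim (at_right 0)
     (\<lambda>e. Inf {ereal (birk \<phi> n z) | n z. n \<ge> 1 \<and> z \<in> Bset x y n e})"

definition peierls :: "(seq \<Rightarrow> real) \<Rightarrow> seq \<Rightarrow> seq \<Rightarrow> ereal" where
  "peierls \<phi> x y = Lim (at_right 0)
     (\<lambda>e. liminf (\<lambda>n. Inf {ereal (birk \<phi> n z) | z. z \<in> Bset x y n e}))"

definition aubry :: "(seq \<Rightarrow> real) \<Rightarrow> seq set" where
  "aubry \<phi> = {x \<in> Xsp. mane \<phi> x x = 0}"

definition continuousX :: "(seq \<Rightarrow> real) \<Rightarrow> bool" where
  "continuousX u \<longleftrightarrow> (\<forall>x\<in>Xsp. \<forall>e>0. \<exists>d>0. \<forall>y\<in>Xsp. dX x y < d \<longrightarrow> \<bar>u y - u x\<bar> < e)"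

definition lipschitzX :: "(seq \<Rightarrow> real) \<Rightarrow> bool" where
  "lipschitzX \<phi> \<longleftrightarrow> (\<exists>L. \<forall>x\<in>Xsp. \<forall>y\<in>Xsp. \<bar>\<phi> x - \<phi> y\<bar> \<le> L * dX x y)"

definition subaction :: "(seq \<Rightarrow> real) \<Rightarrow> (seq \<Rightarrow> real) \<Rightarrow> bool" where
  "subaction \<phi> u \<longleftrightarrow> continuousX u \<and>
     (\<forall>x\<in>Xsp. u x + \<phi> x \<ge> u (shift x) + alpha \<phi>)"

definition calibrated_subaction :: "(seq \<Rightarrow> real) \<Rightarrow> (seq \<Rightarrow> real) \<Rightarrow> bool" where
  "calibrated_subaction \<phi> u \<longleftrightarrow> subaction \<phi> u \<and>
     (\<forall>x\<in>Xsp. (\<exists>y\<in>Xsp. shift y = x \<and> \<phi> y + u y = u x + alpha \<phi>) \<and>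
               (\<forall>y\<in>Xsp. shift y = x \<longrightarrow> \<phi> y + u y \<ge> u x + alpha \<phi>))"

end

theory Submission
  imports Defs "HOL-Analysis.Analysis"
begin

lemma dX_sym: "dX x y = dX y x"
  unfolding dX_def by (simp add: abs_minus_commute)

lemma shift_Xsp: "x \<in> Xsp \<Longrightarrow> shift x \<in> Xsp"
  unfolding Xsp_def shift_def by auto

lemma funpow_shift_Xsp: "x \<in> Xsp \<Longrightarrow> (shift ^^ n) x \<in> Xsp"
  by (induction n) (auto simp: shift_Xsp)

lemma birk_Suc: "birk \<phi> (Suc n) z = birk \<phi> n z + (\<phi> ((shift ^^ n) z) - alpha \<phi>)"
  by (simp add: birk_def)

lemma birk_lower:
  assumes "subaction \<phi> u" "z \<in> Xsp"
  shows "birk \<phi> n z \<ge> u ((shift ^^ n) z) - u z"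
proof (induction n)
  case 0 then show ?case by (simp add: birk_def)
next
  case (Suc n)
  have "(shift ^^ n) z \<in> Xsp" using assms(2) by (rule funpow_shift_Xsp)
  then have "u ((shift ^^ n) z) + \<phi> ((shift ^^ n) z) \<ge> u (shift ((shift ^^ n) z)) + alpha \<phi>"
    using assms(1) unfolding subaction_def by blast
  then show ?case using Suc by (simp add: birk_Suc)
qed

lemma mono_Lim:
  fixes g :: "real \<Rightarrow> ereal"
  assumes "\<And>e1 e2. 0 < e1 \<Longrightarrow> e1 \<le> e2 \<Longrightarrow> g e2 \<le> g e1"
  shows "Lim (at_right 0) g = (SUP e\<in>{0<..}. g e)"
proof -
  have "(g \<longlongrightarrow> (SUP e\<in>{0<..}. g e)) (at_right 0)"
  proof (rule order_tendstoI)
    fix a assume "a < (SUP e\<in>{0<..}. g e)"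
    then obtain e0 where e0: "e0 > 0" "a < g e0" by (auto simp: less_SUP_iff)
    show "\<forall>\<^sub>F x in at_right 0. a < g x"
      unfolding eventually_at_right_field
    proof (intro exI[of _ e0] conjI allI impI)
      fix y :: real assume "0 < y" "y < e0"
      then have "g e0 \<le> g y" using assms by auto
      then show "a < g y" using e0(2) by (rule less_le_trans[rotated])
    qed (use e0 in auto)
  next
    fix a assume "(SUP e\<in>{0<..}. g e) < a"
    then show "\<forall>\<^sub>F x in at_right 0. g x < a"
      unfolding eventually_at_right_field
    proof (intro exI[of _ 1] conjI allI impI)
      fix y :: real assume "0 < y" "y < 1"
      then have "g y \<le> (SUP e\<in>{0<..}. g e)" by (intro SUP_upper) auto
      then show "g y < a" using \<open>(SUP e\<in>{0<..}. g e) < a\<close> by (rule le_less_trans)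
    qed auto
  qed
  then show ?thesis by (intro tendsto_Lim) auto
qed

lemma Bset_mono: "e1 \<le> e2 \<Longrightarrow> Bset x y n e1 \<subseteq> Bset x y n e2"
  by (auto simp: Bset_def)

lemma mane_SUP: "mane \<phi> x y = (SUP e\<in>{0<..}. Inf {ereal (birk \<phi> n z) | n z. n \<ge> 1 \<and> z \<in> Bset x y n e})"
  unfolding mane_def
proof (rule mono_Lim, rule Inf_superset_mono, rule subsetI)
  fix e1 e2 :: real and w assume "0 < e1" and le: "e1 \<le> e2" and w: "w \<in> {ereal (birk \<phi> n z) | n z. n \<ge> 1 \<and> z \<in> Bset x y n e1}"
  from w obtain n z where nz: "w = ereal (birk \<phi> n z)" "n \<ge> 1" "z \<in> Bset x y n e1"
    by blast
  have "z \<in> Bset x y n e2" using nz(3) Bset_mono[OF le] by (rule subsetD[rotated])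
  then show "w \<in> {ereal (birk \<phi> n z) | n z. n \<ge> 1 \<and> z \<in> Bset x y n e2}" using nz(1,2) by blast
qed

lemma peierls_SUP: "peierls \<phi> x y = (SUP e\<in>{0<..}. liminf (\<lambda>n. Inf {ereal (birk \<phi> n z) | z. z \<in> Bset x y n e}))"
  unfolding peierls_def
proof (rule mono_Lim, rule Liminf_mono, rule always_eventually, intro allI Inf_superset_mono subsetI)
  fix e1 e2 :: real and n w assume "0 < e1" and le: "e1 \<le> e2" and w: "w \<in> {ereal (birk \<phi> n z) | z. z \<in> Bset x y n e1}"
  from w obtain z where nz: "w = ereal (birk \<phi> n z)" "z \<in> Bset x y n e1"
    by blast
  have "z \<in> Bset x y n e2" using nz(2) Bset_mono[OF le] by (rule subsetD[rotated])
  then show "w \<in> {ereal (birk \<phi> n z) | z. z \<in> Bset x y n e2}" using nz(1) by blast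
qed

lemma lower_delta:
  assumes "subaction \<phi> u" "x \<in> Xsp" "y \<in> Xsp" "c < u y - u x"
  shows "\<exists>d>0. \<forall>n z. z \<in> Bset x y n d \<longrightarrow> c < birk \<phi> n z"
proof -
  define ep where "ep = (u y - u x - c) / 2"
  have ep: "ep > 0" using assms(4) by (simp add: ep_def)
  have cu: "continuousX u" using assms(1) by (simp add: subaction_def)
  obtain d1 where d1: "d1 > 0" "\<forall>z\<in>Xsp. dX x z < d1 \<longrightarrow> \<bar>u z - u x\<bar> < ep"
    using cu assms(2) ep unfolding continuousX_def by blast
  obtain d2 where d2: "d2 > 0" "\<forall>z\<in>Xsp. dX y z < d2 \<longrightarrow> \<bar>u z - u y\<bar> < ep"
    using cu assms(3) ep unfolding continuousX_def by blast
  show ?thesis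
  proof (intro exI[of _ "min d1 d2"] conjI allI impI)
    show "0 < min d1 d2" using d1 d2 by simp
    fix n z assume z: "z \<in> Bset x y n (min d1 d2)"
    then have zX: "z \<in> Xsp" and a1: "dX x z < d1" and a2: "dX y ((shift ^^ n) z) < d2"
      by (auto simp: Bset_def dX_sym)
    have "\<bar>u z - u x\<bar> < ep" using d1 zX a1 by blast
    moreover have "\<bar>u ((shift ^^ n) z) - u y\<bar> < ep" using d2 funpow_shift_Xsp[OF zX] a2 by blast
    moreover have "birk \<phi> n z \<ge> u ((shift ^^ n) z) - u z" by (rule birk_lower[OF assms(1) zX])
    ultimately have h: "u z < u x + ep" "u y - ep < u ((shift ^^ n) z)" "u ((shift ^^ n) z) - u z \<le> birk \<phi> n z"
      by (auto simp: abs_less_iff)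
    have "c = u y - u x - 2 * ep" unfolding ep_def by (simp add: field_simps)
    with h show "c < birk \<phi> n z" by linarith
  qed
qed

lemma ereal_le_from_below:
  fixes P :: ereal
  assumes "\<And>c. c < r \<Longrightarrow> ereal c \<le> P"
  shows "ereal r \<le> P"
proof (rule dense_le)
  fix c :: ereal assume "c < ereal r"
  then show "c \<le> P" using assms by (cases c) auto
qed

lemma ereal_le_from_above:
  fixes P :: ereal
  assumes "\<And>c. c > r \<Longrightarrow> P \<le> ereal c"
  shows "P \<le> ereal r"
proof (rule dense_ge)
  fix c :: ereal assume "ereal r < c"
  then show "P \<le> c" using assms by (cases c) auto
qed

lemma mane_lower:
  assumes "subaction \<phi> u" "x \<in> Xsp" "y \<in> Xsp"
  shows "ereal (u y - u x) \<le> mane \<phi> x y"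
proof (rule ereal_le_from_below)
  fix c assume "c < u y - u x"
  from lower_delta[OF assms this] obtain d where d: "d > 0" "\<forall>n z. z \<in> Bset x y n d \<longrightarrow> c < birk \<phi> n z" by blast
  have "ereal c \<le> Inf {ereal (birk \<phi> n z) | n z. n \<ge> 1 \<and> z \<in> Bset x y n d}"
    using d(2) by (intro Inf_greatest) (auto intro: less_imp_le)
  also have "\<dots> \<le> mane \<phi> x y" unfolding mane_SUP using d(1) by (intro SUP_upper) auto
  finally show "ereal c \<le> mane \<phi> x y" .
qed

lemma peierls_lower:
  assumes "subaction \<phi> u" "x \<in> Xsp" "y \<in> Xsp"
  shows "ereal (u y - u x) \<le> peierls \<phi> x y"
proof (rule ereal_le_from_below)
  fix c assume "c < u y - u x"
  from lower_delta[OF assms this] obtain d where d: "d > 0" "\<forall>n z. z \<in> Bset x y n d \<longrightarrow> c < birk \<phi> n z" by blast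
  have "ereal c \<le> liminf (\<lambda>n. Inf {ereal (birk \<phi> n z) | z. z \<in> Bset x y n d})"
    using d(2) by (intro Liminf_bounded always_eventually allI Inf_greatest) (auto intro: less_imp_le)
  also have "\<dots> \<le> peierls \<phi> x y" unfolding peierls_SUP using d(1) by (intro SUP_upper) auto
  finally show "ereal c \<le> peierls \<phi> x y" .
qed

lemma seqc: fixes f :: "nat \<Rightarrow> nat \<Rightarrow> real"
  assumes "\<And>n i. f n i \<in> {0..1}"
  shows "\<exists>l r. strict_mono r \<and> (\<forall>i. l i \<in> {0..1}) \<and> (\<forall>i. (\<lambda>n. f (r n) i) \<longlonglongrightarrow> l i)"
proof -
  have "compactin (product_topology (\<lambda>i. euclidean) UNIV) (PiE UNIV (\<lambda>i::nat. {0..1::real}))"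
    by (simp add: compactin_PiE)
  then have c: "compact (PiE UNIV (\<lambda>i::nat. {0..1::real}))"
    by (simp add: euclidean_product_topology)
  have "\<And>n. f n \<in> PiE UNIV (\<lambda>i::nat. {0..1::real})" using assms by (simp add: PiE_UNIV_domain)
  then have "\<exists>l\<in>PiE UNIV (\<lambda>i::nat. {0..1::real}). \<exists>r. strict_mono r \<and> (f \<circ> r) \<longlonglongrightarrow> l"
    using compact_imp_seq_compact[OF c] unfolding seq_compact_def by simp
  then obtain l r where l: "l \<in> PiE UNIV (\<lambda>i::nat. {0..1::real})" "strict_mono r" "(f \<circ> r) \<longlonglongrightarrow> l"
    by (elim bexE exE conjE)
  have lim: "(\<lambda>n. f (r n) i) \<longlonglongrightarrow> l i" for i
  proof -
    have "continuous_on UNIV (\<lambda>x::nat\<Rightarrow>real. x i)" by (rule continuous_on_product_coordinates)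
    then have "isCont (\<lambda>x::nat\<Rightarrow>real. x i) l"
      by (rule continuous_on_interior) simp
    from isCont_tendsto_compose[OF this l(3)] show ?thesis by (simp add: o_def)
  qed
  have "\<forall>i. l i \<in> {0..1}" using l(1) unfolding PiE_iff by blast
  with l(2) lim show ?thesis by (intro exI[of _ l] exI[of _ r] conjI allI) simp_all
qed

lemma term_bound:
  assumes "x \<in> Xsp" "z \<in> Xsp"
  shows "\<bar>x i - z i\<bar> / 2 ^ (i + 1) \<le> (1/2::real) ^ (i + 1)"
proof -
  have "x i \<in> {0..1}" "z i \<in> {0..1}" using assms by (auto simp: Xsp_def)
  then have "\<bar>x i - z i\<bar> \<le> 1" by auto
  then show ?thesis by (simp add: power_one_over divide_right_mono)
qed

lemma dX_summable:
  assumes "x \<in> Xsp" "z \<in> Xsp"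
  shows "summable (\<lambda>i. \<bar>x i - z i\<bar> / 2 ^ (i + 1))"
proof (rule summable_comparison_test)
  show "\<exists>N. \<forall>n\<ge>N. norm (\<bar>x n - z n\<bar> / 2 ^ (n + 1)) \<le> (1/2::real) ^ (n + 1)"
    using term_bound[OF assms] by auto
  show "summable (\<lambda>n. (1/2::real) ^ (n + 1))"
    using summable_ignore_initial_segment[OF summable_geometric[of "1/2::real"], of 1] by simp
qed

lemma dX_small:
  assumes "x \<in> Xsp" "\<And>n. f n \<in> Xsp" "\<And>i. (\<lambda>n. f n i) \<longlonglongrightarrow> x i" "ep > 0"
  shows "eventually (\<lambda>n. dX x (f n) < ep) sequentially"
proof -
  obtain N where N: "(1/2::real)^N < ep/2" using real_arch_pow_inv[of "ep/2" "1/2"] assms(4) by auto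
  have T: "(\<lambda>n. \<Sum>i<N. \<bar>x i - f n i\<bar> / 2^(i+1)) \<longlonglongrightarrow> (\<Sum>i<N. \<bar>x i - x i\<bar> / (2::real)^(i+1))"
    by (intro tendsto_sum tendsto_divide tendsto_rabs tendsto_diff tendsto_const assms(3)) auto
  have "eventually (\<lambda>n. (\<Sum>i<N. \<bar>x i - f n i\<bar> / 2^(i+1)) < ep/2) sequentially"
    by (rule order_tendstoD(2)[OF T]) (use assms(4) in simp)
  then show ?thesis
  proof (rule eventually_mono)
    fix n assume A: "(\<Sum>i<N. \<bar>x i - f n i\<bar> / 2^(i+1)) < ep/2"
    define t where "t = (\<lambda>i. \<bar>x i - f n i\<bar> / (2::real)^(i+1))"
    have s: "summable t" unfolding t_def by (rule dX_summable[OF assms(1,2)])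
    have eq: "dX x (f n) = (\<Sum>i. t (i+N)) + (\<Sum>i<N. t i)"
      unfolding dX_def t_def[symmetric] by (rule suminf_split_initial_segment[OF s])
    have gs: "(\<lambda>i. (1/2::real)^(N+1) * (1/2)^i) sums ((1/2)^(N+1) * (1 / (1 - 1/2)))"
      by (intro sums_mult geometric_sums) simp
    have "(\<Sum>i. t (i+N)) \<le> (\<Sum>i. (1/2::real)^(N+1) * (1/2)^i)"
    proof (rule suminf_le)
      fix i
      have "t (i+N) \<le> (1/2)^(i+N+1)" unfolding t_def by (rule term_bound[OF assms(1,2)])
      also have "\<dots> = (1/2::real)^(N+1) * (1/2)^i" by (simp add: power_add)
      finally show "t (i+N) \<le> (1/2::real)^(N+1) * (1/2)^i" .
    next
      show "summable (\<lambda>i. t (i+N))" using s by (rule summable_ignore_initial_segment)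
    next
      show "summable (\<lambda>i. (1/2::real)^(N+1) * (1/2)^i)" using gs by (rule sums_summable)
    qed
    also have "\<dots> = (1/2)^(N+1) * (1 / (1 - 1/2))" using gs by (rule sums_unique[symmetric])
    also have "\<dots> = (1/2)^N" by simp
    finally have "(\<Sum>i. t (i+N)) \<le> (1/2)^N" .
    moreover have "ep/2 + ep/2 = ep" by simp
    ultimately show "dX x (f n) < ep" using eq A N unfolding t_def by linarith
  qed
qed

lemma dX_self: "dX y y = 0"
  by (simp add: dX_def)

lemma ereal_add_ge: "ereal (a - b) \<le> P \<Longrightarrow> ereal a \<le> P + ereal b"
  by (cases P) auto

lemma ereal_add_le: "P \<le> ereal (a - b) \<Longrightarrow> P + ereal b \<le> ereal a"
  by (cases P) auto


theorem theorem2p12: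
  fixes \<phi> u :: "seq \<Rightarrow> real"
  assumes "lipschitzX \<phi>"
    and "calibrated_subaction \<phi> u"
  shows "\<forall>y\<in>Xsp. ereal (u y) = (INF x\<in>aubry \<phi>. peierls \<phi> x y + ereal (u x))"
proof
  fix y assume yX: "y \<in> Xsp"
  have sub: "subaction \<phi> u" using assms(2) unfolding calibrated_subaction_def by blast
  have cu: "continuousX u" using sub by (simp add: subaction_def)
  have "\<forall>x\<in>Xsp. \<exists>w. w \<in> Xsp \<and> shift w = x \<and> \<phi> w + u w = u x + alpha \<phi>"
    using assms(2) unfolding calibrated_subaction_def by blast
  then obtain p where p: "\<And>x. x \<in> Xsp \<Longrightarrow> p x \<in> Xsp \<and> shift (p x) = x \<and> \<phi> (p x) + u (p x) = u x + alpha \<phi>"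
    by metis
  define Y where "Y k = (p ^^ k) y" for k
  have YX: "Y k \<in> Xsp" for k
  proof (induction k)
    case 0 then show ?case using yX by (simp add: Y_def)
  next
    case (Suc k) then show ?case using p[of "Y k"] by (simp add: Y_def)
  qed
  have Ysh: "shift (Y (Suc k)) = Y k" for k using p[OF YX[of k]] by (simp add: Y_def)
  have Yphi: "\<phi> (Y (Suc k)) + u (Y (Suc k)) = u (Y k) + alpha \<phi>" for k
    using p[OF YX[of k]] by (simp add: Y_def)
  have Yshn: "(shift ^^ n) (Y (m+n)) = Y m" for m n
  proof (induction n arbitrary: m)
    case 0 then show ?case by simp
  next
    case (Suc n)
    have "(shift ^^ Suc n) (Y (m + Suc n)) = (shift ^^ n) (shift (Y (Suc (m + n))))"
      by (simp only: funpow_Suc_right comp_apply add_Suc_right)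
    also have "\<dots> = (shift ^^ n) (Y (m + n))" by (simp add: Ysh)
    finally show ?case using Suc.IH by simp
  qed
  have Ybirk: "birk \<phi> n (Y (m+n)) = u (Y m) - u (Y (m+n))" for m n
  proof (induction n arbitrary: m)
    case 0 then show ?case by (simp add: birk_def)
  next
    case (Suc n)
    have e1: "Y (m + Suc n) = Y (Suc m + n)" by simp
    have "birk \<phi> (Suc n) (Y (Suc m + n)) = birk \<phi> n (Y (Suc m + n)) + (\<phi> ((shift ^^ n) (Y (Suc m + n))) - alpha \<phi>)"
      by (rule birk_Suc)
    also have "(shift ^^ n) (Y (Suc m + n)) = Y (Suc m)" by (rule Yshn)
    finally have "birk \<phi> (Suc n) (Y (Suc m + n)) = u (Y (Suc m)) - u (Y (Suc m + n)) + (\<phi> (Y (Suc m)) - alpha \<phi>)"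
      using Suc.IH[of "Suc m"] by simp
    then show ?case unfolding e1 using Yphi[of m] by simp
  qed
  have "\<And>n i. Y n i \<in> {0..1}" using YX by (simp add: Xsp_def)
  from seqc[of Y, OF this] obtain l r where lr: "strict_mono r" "\<forall>i. l i \<in> {0..1}" "\<forall>i. (\<lambda>n. Y (r n) i) \<longlonglongrightarrow> l i"
    by blast
  have lX: "l \<in> Xsp" using lr(2) by (simp add: Xsp_def)
  have close: "eventually (\<lambda>n. dX l (Y (r n)) < ep) sequentially" if "ep > 0" for ep
    using dX_small[of l "\<lambda>n. Y (r n)" ep] lX YX lr(3) that by blast
  have ucl: "eventually (\<lambda>n. \<bar>u (Y (r n)) - u l\<bar> < eta) sequentially" if eta_pos: "eta > 0" for eta
  proof -
    obtain d where d: "d > 0" "\<forall>z\<in>Xsp. dX l z < d \<longrightarrow> \<bar>u z - u l\<bar> < eta"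
      using cu lX eta_pos unfolding continuousX_def by blast
    show ?thesis using close[OF d(1)] by (rule eventually_mono) (use d(2) YX in blast)
  qed
  have both: "\<exists>N. \<forall>n\<ge>N. dX l (Y (r n)) < e \<and> \<bar>u (Y (r n)) - u l\<bar> < eta" if "e > 0" "eta > 0" for e eta
    using eventually_conj[OF close[OF that(1)] ucl[OF that(2)]] unfolding eventually_sequentially .
  have Y0: "Y 0 = y" by (simp add: Y_def)
  have rge: "n \<le> r n" for n using lr(1) by (rule seq_suble)
  have mane_le: "mane \<phi> l l \<le> 0"
    unfolding mane_SUP
  proof (rule SUP_least)
    fix e :: real assume "e \<in> {0<..}"
    then have e: "e > 0" by simp
    show "Inf {ereal (birk \<phi> n z) | n z. n \<ge> 1 \<and> z \<in> Bset l l n e} \<le> 0"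
      using ereal_le_from_above[of 0] zero_ereal_def
    proof -
      have "Inf {ereal (birk \<phi> n z) | n z. n \<ge> 1 \<and> z \<in> Bset l l n e} \<le> ereal c" if c: "c > 0" for c
      proof -
        obtain N where N: "\<forall>n\<ge>N. dX l (Y (r n)) < e \<and> \<bar>u (Y (r n)) - u l\<bar> < c/2"
          using both[OF e, of "c/2"] c by auto
        define n1 where "n1 = r N"
        define k where "k = r (Suc N) - r N"
        have lt: "r N < r (Suc N)" using lr(1) by (simp add: strict_mono_def)
        then have k1: "k \<ge> 1" and n2: "r (Suc N) = n1 + k" by (auto simp: k_def n1_def)
        define z where "z = Y (n1 + k)"
        have zsh: "(shift ^^ k) z = Y n1" unfolding z_def by (rule Yshn)
        have N1: "dX l (Y (r N)) < e" "\<bar>u (Y (r N)) - u l\<bar> < c/2" using N by auto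
        have N2: "dX l (Y (r (Suc N))) < e" "\<bar>u (Y (r (Suc N))) - u l\<bar> < c/2" using N by auto
        have zB: "z \<in> Bset l l k e"
        proof -
          have zeq: "z = Y (r (Suc N))" unfolding z_def using n2 by simp
          show ?thesis unfolding Bset_def using YX N1(1) N2(1) zsh zeq by (simp add: n1_def dX_sym)
        qed
        have bz: "birk \<phi> k z = u (Y n1) - u (Y (n1 + k))" unfolding z_def by (rule Ybirk)
        have "birk \<phi> k z < c"
        proof -
          have "c/2 + c/2 = c" by simp
          moreover have "birk \<phi> k z = u (Y (r N)) - u (Y (r (Suc N)))" using bz n2 by (simp add: n1_def)
          ultimately show ?thesis using N1(2) N2(2) unfolding abs_less_iff by linarith
        qed
        have "Inf {ereal (birk \<phi> n z) | n z. n \<ge> 1 \<and> z \<in> Bset l l n e} \<le> ereal (birk \<phi> k z)"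
          using k1 zB by (intro Inf_lower) blast
        also have "\<dots> \<le> ereal c" using \<open>birk \<phi> k z < c\<close> by simp
        finally show ?thesis .
      qed
      then have "Inf {ereal (birk \<phi> n z) | n z. n \<ge> 1 \<and> z \<in> Bset l l n e} \<le> ereal 0"
        by (rule ereal_le_from_above)
      then show ?thesis by (simp add: zero_ereal_def)
    qed
  qed
  have "ereal (u l - u l) \<le> mane \<phi> l l" by (rule mane_lower[OF sub lX lX])
  then have "mane \<phi> l l = 0" using mane_le by (simp add: zero_ereal_def)
  then have lA: "l \<in> aubry \<phi>" using lX by (simp add: aubry_def)
  have pl: "peierls \<phi> l y \<le> ereal (u y - u l)"
    unfolding peierls_SUP
  proof (rule SUP_least)
    fix e :: real assume "e \<in> {0<..}"
    then have e: "e > 0" by simp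
    show "liminf (\<lambda>n. Inf {ereal (birk \<phi> n z) | z. z \<in> Bset l y n e}) \<le> ereal (u y - u l)"
    proof (rule ereal_le_from_above)
      fix c assume c: "c > u y - u l"
      obtain N where N: "\<forall>n\<ge>N. dX l (Y (r n)) < e \<and> \<bar>u (Y (r n)) - u l\<bar> < c - (u y - u l)"
        using both[OF e, of "c - (u y - u l)"] c by auto
      show "liminf (\<lambda>n. Inf {ereal (birk \<phi> n z) | z. z \<in> Bset l y n e}) \<le> ereal c"
        unfolding liminf_SUP_INF
      proof (rule SUP_least)
        fix M :: nat
        define m where "m = r (max M N)"
        have mM: "m \<ge> M" using rge[of "max M N"] by (simp add: m_def)
        have Nm: "dX l (Y m) < e" "\<bar>u (Y m) - u l\<bar> < c - (u y - u l)"
          using N by (auto simp: m_def)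
        have sh: "(shift ^^ m) (Y m) = y" using Yshn[where m=0 and n=m] Y0 by simp
        have zB: "Y m \<in> Bset l y m e"
          unfolding Bset_def using YX Nm(1) sh e by (simp add: dX_self)
        have bz: "birk \<phi> m (Y m) = u y - u (Y m)" using Ybirk[where m=0 and n=m] Y0 by simp
        have "birk \<phi> m (Y m) < c" using bz Nm(2) unfolding abs_less_iff by linarith
        have "(INF n\<in>{M..}. Inf {ereal (birk \<phi> n z) | z. z \<in> Bset l y n e}) \<le> Inf {ereal (birk \<phi> m z) | z. z \<in> Bset l y m e}"
          using mM by (intro INF_lower) simp
        also have "\<dots> \<le> ereal (birk \<phi> m (Y m))" using zB by (intro Inf_lower) blast
        also have "\<dots> \<le> ereal c" using \<open>birk \<phi> m (Y m) < c\<close> by simp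
        finally show "(INF n\<in>{M..}. Inf {ereal (birk \<phi> n z) | z. z \<in> Bset l y n e}) \<le> ereal c" .
      qed
    qed
  qed
  have up: "peierls \<phi> l y + ereal (u l) \<le> ereal (u y)" using pl by (rule ereal_add_le)
  have low: "ereal (u y) \<le> peierls \<phi> x y + ereal (u x)" if "x \<in> aubry \<phi>" for x
  proof -
    have "x \<in> Xsp" using that by (simp add: aubry_def)
    then show ?thesis using peierls_lower[OF sub _ yX] by (intro ereal_add_ge) blast
  qed
  show "ereal (u y) = (INF x\<in>aubry \<phi>. peierls \<phi> x y + ereal (u x))"
  proof (rule antisym)
    show "ereal (u y) \<le> (INF x\<in>aubry \<phi>. peierls \<phi> x y + ereal (u x))"
      using low by (intro INF_greatest) blast
    show "(INF x\<in>aubry \<phi>. peierls \<phi> x y + ereal (u x)) \<le> ereal (u y)"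
      using lA up by (intro INF_lower2) blast
  qed
qed

end
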